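(* Let $n\in\mathbb{N}$ and $0\leq\delta\leq n-1$, and let $q$ be a prime power with $n\leq q-1$. Put $\mathbb{F}:=\mathbb{F}_q$ and choose $\alpha\in\mathbb{F}$ with $\mathrm{ord}(\alpha)\geq n$. Define \[ G:=\sum_{\nu=0}^{\delta}z^\nu\begin{pmatrix}1&\alpha^\nu&\alpha^{2\nu}&\ldots&\alpha^{(n-1)\nu}\end{pmatrix}\in\mathbb{F}[z]^{1\times n} \] and $\mathcal{C}:=\mathrm{im}\,G=\{uG\mid u\in\mathbb{F}[z]\}\subseteq\mathbb{F}[z]^n$. Then $G$ is right invertible (so $\mathcal{C}$ is a convolutional code with parameters $(n,1,\delta)$), and $\mathrm{dist}(\mathcal{C})=n(\delta+1)$. In other words, $\mathcal{C}$ is an MDS convolutional code with parameters $(n,1,\delta)$.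
   Context: $\mathrm{ord}(\alpha)$ denotes the multiplicative order of $\alpha$ in $\mathbb{F}^*$. A matrix $G\in\mathbb{F}[z]^{k\times n}$ is right invertible if $G\tilde G=I_k$ for some $\tilde G\in\mathbb{F}[z]^{n\times k}$. A convolutional code with parameters $(n,k,\delta)$ is a submodule $\mathcal{C}=\mathrm{im}\,G=\{uG\mid u\in\mathbb{F}[z]^k\}\subseteq\mathbb{F}[z]^n$ where $G\in\mathbb{F}[z]^{k\times n}$ is right invertible and $\delta$ is the maximum degree of the $k\times k$ minors of $G$ (the overall constraint length). For $v=\sum_{j=0}^N v_jz^j\in\mathbb{F}[z]^n$ with $v_j\in\mathbb{F}^n$, the weight is $\mathrm{wt}(v)=\sum_j\mathrm{wt}(v_j)$ with Hamming weight $\mathrm{wt}(v_j)$, and $\mathrm{dist}(\mathcal{C})=\min\{\mathrm{wt}(v)\mid v\in\mathcal{C},v\neq0\}$. A code with parameters $(n,k,\delta)$ is MDS if its distance equals $(n-k)(\lfloor\delta/k\rfloor+1)+\delta+1$, which for $k=1$ equals $n(\delta+1)$. *)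

theory Defs
  imports "HOL-Computational_Algebra.Polynomial" "HOL-Library.Cardinality"
begin

definition mult_ord :: "'a::{finite,field} \<Rightarrow> nat" where
  "mult_ord a = (LEAST k. 0 < k \<and> a ^ k = 1)"

text \<open>Vectors in F[z]^n are functions nat => 'a poly, indices j < n are relevant.\<close>

definition right_invertible_row :: "nat \<Rightarrow> (nat \<Rightarrow> 'a::comm_ring_1 poly) \<Rightarrow> bool" where
  "right_invertible_row n G \<longleftrightarrow> (\<exists>Gt :: nat \<Rightarrow> 'a poly. (\<Sum>j<n. G j * Gt j) = 1)"

definition row_code :: "nat \<Rightarrow> (nat \<Rightarrow> 'a::comm_ring_1 poly) \<Rightarrow> (nat \<Rightarrow> 'a poly) set" where
  "row_code n G = {(\<lambda>j. if j < n then u * G j else 0) | u. True}"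

text \<open>Overall constraint length of a 1 x n matrix: maximal degree of its 1 x 1 minors.\<close>
definition row_constraint_length :: "nat \<Rightarrow> (nat \<Rightarrow> 'a::zero poly) \<Rightarrow> nat" where
  "row_constraint_length n G = Max ((\<lambda>j. degree (G j)) ` {..<n})"

definition hamming_wt :: "nat \<Rightarrow> (nat \<Rightarrow> 'a::zero) \<Rightarrow> nat" where
  "hamming_wt n w = card {j. j < n \<and> w j \<noteq> 0}"

definition poly_vec_wt :: "nat \<Rightarrow> (nat \<Rightarrow> 'a::zero poly) \<Rightarrow> nat" where
  "poly_vec_wt n v = (\<Sum>i\<le>Max ((\<lambda>j. degree (v j)) ` {..<n}). hamming_wt n (\<lambda>j. coeff (v j) i))"

definition code_dist :: "nat \<Rightarrow> (nat \<Rightarrow> 'a::zero poly) set \<Rightarrow> nat" where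
  "code_dist n C = Inf {poly_vec_wt n v | v. v \<in> C \<and> v \<noteq> (\<lambda>_. 0)}"

definition G_mat :: "'a::comm_ring_1 \<Rightarrow> nat \<Rightarrow> nat \<Rightarrow> 'a poly" where
  "G_mat \<alpha> \<delta> j = (\<Sum>\<nu>\<le>\<delta>. monom (\<alpha> ^ (j * \<nu>)) \<nu>)"

end

theory Submission
  imports Defs
begin


lemma coeff_G: "coeff (G_mat \<alpha> \<delta> j) \<nu> = (if \<nu> \<le> \<delta> then \<alpha>^(j*\<nu>) else 0)"
  unfolding G_mat_def coeff_sum coeff_monom
  by (simp add: sum.delta' atMost_def)

lemma pow_inj:
  fixes \<alpha> :: "'a::{finite,field}"
  assumes "\<alpha> \<noteq> 0" "mult_ord \<alpha> \<ge> n"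
  shows "inj_on (\<lambda>j. \<alpha>^j) {..<n}"
proof -
  have *: "False" if "i < j" "j < n" "\<alpha>^i = \<alpha>^j" for i j
  proof -
    have "\<alpha>^j = \<alpha>^i * \<alpha>^(j-i)" using that(1) by (simp add: power_add[symmetric])
    hence "\<alpha>^(j-i) = 1" using that(3) assms(1) by simp
    hence "mult_ord \<alpha> \<le> j - i" unfolding mult_ord_def using that(1) by (intro Least_le) simp
    thus False using that assms(2) by linarith
  qed
  show ?thesis unfolding inj_on_def
    by (metis * lessThan_iff linorder_neqE_nat)
qed

lemma roots_bound:
  fixes \<alpha> :: "'a::field" and P :: "'a poly"
  assumes "\<alpha> \<noteq> 0" "inj_on (\<lambda>j. \<alpha>^j) {..<n}" "P \<noteq> 0"
    "\<And>k. k < l \<Longrightarrow> coeff P k = 0" "degree P \<le> h"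
  shows "card {j. j<n \<and> poly P (\<alpha>^j) = 0} \<le> h - l"
proof -
  define Q where "Q = poly_shift l P"
  have PQ: "P = monom 1 l * Q"
    by (rule poly_eqI) (auto simp: coeff_monom_mult Q_def coeff_poly_shift assms(4))
  have Q0: "Q \<noteq> 0" using PQ assms(3) by auto
  have "degree P = l + degree Q" using PQ Q0 by (simp add: degree_mult_eq degree_monom_eq)
  hence dQ: "degree Q \<le> h - l" using assms(5) by linarith
  let ?S = "{j. j<n \<and> poly P (\<alpha>^j) = 0}"
  have "(\<lambda>j. \<alpha>^j) ` ?S \<subseteq> {x. poly Q x = 0}"
    using assms(1) by (auto simp: PQ poly_monom)
  hence "card ((\<lambda>j. \<alpha>^j) ` ?S) \<le> card {x. poly Q x = 0}"
    by (intro card_mono poly_roots_finite Q0)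
  also have "card ((\<lambda>j. \<alpha>^j) ` ?S) = card ?S"
    by (rule card_image, rule inj_on_subset[OF assms(2)]) auto
  finally show ?thesis using card_poly_roots_bound[OF Q0] dQ by linarith
qed



lemma right_inv:
  fixes \<alpha> :: "'a::{finite,field}"
  assumes "\<alpha> \<noteq> 0" "inj_on (\<lambda>j. \<alpha>^j) {..<n}" "\<delta> < n"
  shows "right_invertible_row n (G_mat \<alpha> \<delta>)"
proof -
  define x where "x j = \<alpha>^j" for j :: nat
  have xinj: "x i = x j \<Longrightarrow> i \<le> \<delta> \<Longrightarrow> j \<le> \<delta> \<Longrightarrow> i = j" for i j
    using assms(2,3) unfolding x_def inj_on_def by auto
  define L where "L j = (\<Prod>k\<in>{..\<delta>}-{j}. smult (inverse (x j - x k)) [:-x k, 1:])" for j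
  have polyL: "poly (L j) (x i) = (if i = j then 1 else 0)" if "i \<le> \<delta>" "j \<le> \<delta>" for i j
  proof (cases "i = j")
    case True
    have "poly (L j) (x i) = (\<Prod>k\<in>{..\<delta>}-{j}. inverse (x j - x k) * (x j - x k))"
      unfolding L_def poly_prod True by (intro prod.cong) (auto simp: algebra_simps)
    also have "\<dots> = 1"
    proof (intro prod.neutral ballI)
      fix k assume "k \<in> {..\<delta>}-{j}"
      hence "x j - x k \<noteq> 0" using xinj[of j k] that by auto
      thus "inverse (x j - x k) * (x j - x k) = 1" by simp
    qed
    finally show ?thesis using True by simp
  next
    case False
    have "poly (L j) (x i) = (\<Prod>k\<in>{..\<delta>}-{j}. inverse (x j - x k) * (x i - x k))"
      unfolding L_def poly_prod by (intro prod.cong) (auto simp: algebra_simps)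
    also have "\<dots> = 0"
      by (rule prod_zero) (use that False in auto)
    finally show ?thesis using False by simp
  qed
  have degL: "degree (L j) \<le> \<delta>" if "j \<le> \<delta>" for j
  proof -
    have "degree (L j) \<le> (\<Sum>k\<in>{..\<delta>}-{j}. degree (smult (inverse (x j - x k)) [:-x k, 1:]))"
      unfolding L_def using degree_prod_sum_le[of "{..\<delta>}-{j}" "\<lambda>k. smult (inverse (x j - x k)) [:-x k, 1:]"] by (simp only: o_def finite_Diff finite_atMost)
    also have "\<dots> \<le> (\<Sum>k\<in>{..\<delta>}-{j}. 1)"
      by (intro sum_mono) (simp add: degree_smult_le)
    also have "\<dots> = \<delta>" using that by simp
    finally show ?thesis .
  qed
  have key: "(\<Sum>j\<le>\<delta>. x j ^ \<nu> * poly (L j) 0) = 0 ^ \<nu>" if "\<nu> \<le> \<delta>" for \<nu>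
  proof -
    define r where "r = (\<Sum>j\<le>\<delta>. smult (x j ^ \<nu>) (L j)) - monom 1 \<nu>"
    have r0: "poly r (x i) = 0" if "i \<le> \<delta>" for i
    proof -
      have "(\<Sum>j\<le>\<delta>. x j ^ \<nu> * poly (L j) (x i)) = (\<Sum>j\<le>\<delta>. if j = i then x i ^ \<nu> else 0)"
        by (intro sum.cong) (use that polyL in auto)
      thus ?thesis using that by (simp add: r_def poly_sum poly_monom)
    qed
    have dr: "degree r \<le> \<delta>"
      unfolding r_def
      by (intro degree_diff_le degree_sum_le) (auto intro: order.trans[OF degree_smult_le] degL simp: degree_monom_le that order.trans[OF degree_monom_le])
    have "r = 0"
    proof (rule ccontr)
      assume "r \<noteq> 0"
      have inj': "inj_on (\<lambda>j. \<alpha>^j) {..<Suc \<delta>}"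
        by (rule inj_on_subset[OF assms(2)]) (use assms(3) in auto)
      from roots_bound[OF assms(1) inj' \<open>r \<noteq> 0\<close>, of 0 \<delta>] dr
      have "card {j. j < Suc \<delta> \<and> poly r (\<alpha> ^ j) = 0} \<le> \<delta>"
        by simp
      moreover have "{j. j < Suc \<delta> \<and> poly r (\<alpha> ^ j) = 0} = {..<Suc \<delta>}"
        using r0 unfolding x_def by auto
      ultimately show False by simp
    qed
    hence "poly r 0 = 0" by simp
    thus ?thesis by (simp add: r_def poly_sum poly_monom)
  qed
  define c where "c j = (if j \<le> \<delta> then poly (L j) 0 else 0)" for j
  have "(\<Sum>j<n. G_mat \<alpha> \<delta> j * [:c j:]) = 1"
  proof (rule poly_eqI)
    fix \<nu>
    have "coeff (\<Sum>j<n. G_mat \<alpha> \<delta> j * [:c j:]) \<nu> = (\<Sum>j<n. c j * (if \<nu> \<le> \<delta> then x j ^ \<nu> else 0))"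
      unfolding coeff_sum by (intro sum.cong refl) (simp add: coeff_G x_def power_mult)
    also have "\<dots> = (\<Sum>j\<le>\<delta>. c j * (if \<nu> \<le> \<delta> then x j ^ \<nu> else 0))"
      by (rule sum.mono_neutral_right) (use assms(3) in \<open>auto simp: c_def\<close>)
    also have "\<dots> = coeff 1 \<nu>"
    proof (cases "\<nu> \<le> \<delta>")
      case True
      have "(\<Sum>j\<le>\<delta>. c j * x j ^ \<nu>) = 0 ^ \<nu>"
        using key[OF True] by (simp add: c_def mult.commute)
      thus ?thesis using True by (simp add: coeff_1)
    next
      case False thus ?thesis by (simp add: coeff_1)
    qed
    finally show "coeff (\<Sum>j<n. G_mat \<alpha> \<delta> j * [:c j:]) \<nu> = coeff 1 \<nu>" .
  qed
  thus ?thesis unfolding right_invertible_row_def by (intro exI[of _ "\<lambda>j. [:c j:]"])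
qed



lemma sum_lt_id2: "2 * (\<Sum>s<D. s) = D * (D - 1)" for D :: nat
proof (induction D)
  case 0 then show ?case by simp
next
  case (Suc D)
  have "2 * (\<Sum>s<Suc D. s) = 2 * (\<Sum>s<D. s) + 2 * D" by simp
  also have "\<dots> = D * (D - 1) + 2 * D" using Suc by simp
  also have "\<dots> = Suc D * (Suc D - 1)" by (cases D) (simp_all add: algebra_simps)
  finally show ?case .
qed

lemma arith_key:
  fixes D \<delta> n :: nat
  assumes "D \<le> \<delta>" "\<delta> < n"
  shows "n * (\<delta> + 1) \<le> (\<Sum>t<D. n - t) + (\<Sum>s\<le>\<delta>. n - min s D)"
proof -
  have split: "{..\<delta>} = {..<D} \<union> {D..\<delta>}" using assms(1) by auto
  have "(\<Sum>s\<le>\<delta>. n - min s D) = (\<Sum>s<D. n - min s D) + (\<Sum>s\<in>{D..\<delta>}. n - min s D)"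
    unfolding split by (rule sum.union_disjoint) auto
  also have "(\<Sum>s<D. n - min s D) = (\<Sum>s<D. n - s)" by (intro sum.cong) auto
  also have "(\<Sum>s\<in>{D..\<delta>}. n - min s D) = (\<Sum>s\<in>{D..\<delta>}. n - D)" by (intro sum.cong) auto
  also have "\<dots> = (\<delta> + 1 - D) * (n - D)" by simp
  finally have e1: "(\<Sum>s\<le>\<delta>. n - min s D) = (\<Sum>s<D. n - s) + (\<delta> + 1 - D) * (n - D)" .
  have e2: "(\<Sum>s<D. n - s) + (\<Sum>s<D. s) = D * n"
  proof -
    have "(\<Sum>s<D. n - s) + (\<Sum>s<D. s) = (\<Sum>s<D. n)"
      unfolding sum.distrib[symmetric] by (intro sum.cong) (use assms in auto)
    thus ?thesis by simp
  qed
  have e3: "2 * (\<Sum>s<D. s) = D * (D - 1)" by (rule sum_lt_id2)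
  define S1 where "S1 = (\<Sum>s<D. n - s)"
  define S0 where "S0 = (\<Sum>s<D. s)"
  have "int (n * (\<delta> + 1)) \<le> int (S1 + S1 + (\<delta> + 1 - D) * (n - D))"
  proof -
    have i2: "int S1 + int S0 = int D * int n" using e2 unfolding S1_def S0_def by (metis of_nat_add of_nat_mult)
    have "int (2*S0) = int (D*(D-1))" using e3 unfolding S0_def by simp
    hence "2*int S0 = int D * int (D-1)" by simp
    hence i3: "2 * int S0 = int D * (int D - 1)" by (cases "D=0") (auto simp: of_nat_diff)
    have "int (S1 + S1 + (\<delta> + 1 - D) * (n - D)) = 2 * int S1 + (int \<delta> + 1 - int D) * (int n - int D)"
      using assms by (simp add: of_nat_diff)
    also have "\<dots> = 2 * int D * int n - int D * (int D - 1) + (int \<delta> + 1 - int D) * (int n - int D)"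
      using i2 i3 by (simp add: algebra_simps)
    also have "\<dots> = int n * (int \<delta> + 1) + int D * (int n - int \<delta>)" by (simp add: algebra_simps)
    finally have "int (S1 + S1 + (\<delta> + 1 - D) * (n - D)) = int n * (int \<delta> + 1) + int D * (int n - int \<delta>)" .
    moreover have "0 \<le> int D * (int n - int \<delta>)" using assms by simp
    ultimately show ?thesis by (simp add: algebra_simps)
  qed
  hence "n * (\<delta> + 1) \<le> S1 + S1 + (\<delta> + 1 - D) * (n - D)" by linarith
  thus ?thesis using e1 unfolding S1_def by simp
qed



definition Pt :: "'a::comm_ring_1 poly \<Rightarrow> nat \<Rightarrow> nat \<Rightarrow> 'a poly" where
  "Pt u \<delta> i = (\<Sum>\<nu>\<le>\<delta>. monom (if \<nu> \<le> i then coeff u (i - \<nu>) else 0) \<nu>)"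

lemma coeff_Pt: "coeff (Pt u \<delta> i) \<nu> = (if \<nu> \<le> \<delta> \<and> \<nu> \<le> i then coeff u (i - \<nu>) else 0)"
  unfolding Pt_def coeff_sum coeff_monom by (auto simp: sum.delta' atMost_def)

lemma coeff_uG: "coeff (u * G_mat \<alpha> \<delta> j) i = poly (Pt u \<delta> i) (\<alpha>^j)"
proof -
  have "coeff (u * G_mat \<alpha> \<delta> j) i = coeff (G_mat \<alpha> \<delta> j * u) i" by (simp add: mult.commute)
  also have "\<dots> = (\<Sum>\<nu>\<le>i. (if \<nu> \<le> \<delta> then (\<alpha>^j)^\<nu> * coeff u (i - \<nu>) else 0))"
    unfolding coeff_mult by (intro sum.cong) (auto simp: coeff_G power_mult)
  also have "\<dots> = (\<Sum>\<nu>\<in>{\<nu>\<in>{..i}. \<nu> \<le> \<delta>}. (\<alpha>^j)^\<nu> * coeff u (i - \<nu>))"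
    by (rule sum.inter_filter[symmetric]) simp
  also have "{\<nu>\<in>{..i}. \<nu> \<le> \<delta>} = {\<nu>\<in>{..\<delta>}. \<nu> \<le> i}" by auto
  also have "(\<Sum>\<nu>\<in>{\<nu>\<in>{..\<delta>}. \<nu> \<le> i}. (\<alpha>^j)^\<nu> * coeff u (i - \<nu>))
      = (\<Sum>\<nu>\<le>\<delta>. (if \<nu> \<le> i then (\<alpha>^j)^\<nu> * coeff u (i - \<nu>) else 0))"
    by (rule sum.inter_filter) simp
  also have "\<dots> = poly (Pt u \<delta> i) (\<alpha>^j)"
    unfolding Pt_def poly_sum poly_monom by (intro sum.cong) auto
  finally show ?thesis .
qed

lemma w_eq:
  "hamming_wt n (\<lambda>j. coeff (if j < n then u * G_mat \<alpha> \<delta> j else 0) i)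
     + card {j. j < n \<and> poly (Pt u \<delta> i) (\<alpha>^j) = 0} = n"
proof -
  have "{j. j < n \<and> coeff (if j < n then u * G_mat \<alpha> \<delta> j else 0) i \<noteq> 0}
      = {j. j < n \<and> poly (Pt u \<delta> i) (\<alpha>^j) \<noteq> 0}" by (auto simp: coeff_uG)
  hence "hamming_wt n (\<lambda>j. coeff (if j < n then u * G_mat \<alpha> \<delta> j else 0) i)
       = card {j. j < n \<and> poly (Pt u \<delta> i) (\<alpha>^j) \<noteq> 0}" unfolding hamming_wt_def by simp
  moreover have "card {j. j < n \<and> poly (Pt u \<delta> i) (\<alpha>^j) \<noteq> 0} + card {j. j < n \<and> poly (Pt u \<delta> i) (\<alpha>^j) = 0}
      = card ({j. j < n \<and> poly (Pt u \<delta> i) (\<alpha>^j) \<noteq> 0} \<union> {j. j < n \<and> poly (Pt u \<delta> i) (\<alpha>^j) = 0})"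
    by (rule card_Un_disjoint[symmetric]) auto
  moreover have "{j. j < n \<and> poly (Pt u \<delta> i) (\<alpha>^j) \<noteq> 0} \<union> {j. j < n \<and> poly (Pt u \<delta> i) (\<alpha>^j) = 0} = {..<n}"
    by auto
  ultimately show ?thesis by simp
qed

lemma weight_lower:
  fixes \<alpha> :: "'a::field" and u :: "'a poly"
  assumes "\<alpha> \<noteq> 0" "inj_on (\<lambda>j. \<alpha>^j) {..<n}" "\<delta> < n" "u \<noteq> 0"
  shows "n * (\<delta> + 1) \<le> (\<Sum>i\<le>degree u + \<delta>. hamming_wt n (\<lambda>j. coeff (if j < n then u * G_mat \<alpha> \<delta> j else 0) i))"
proof -
  define w where "w i = hamming_wt n (\<lambda>j. coeff (if j < n then u * G_mat \<alpha> \<delta> j else 0) i)" for i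
  define R where "R i = card {j. j < n \<and> poly (Pt u \<delta> i) (\<alpha>^j) = 0}" for i
  have wR: "w i + R i = n" for i unfolding w_def R_def by (rule w_eq)
  define d where "d = degree u"
  define a where "a = (LEAST k. coeff u k \<noteq> 0)"
  have ud: "coeff u d \<noteq> 0" using assms(4) unfolding d_def by simp
  have ua: "coeff u a \<noteq> 0" unfolding a_def by (rule LeastI[of _ d]) (rule ud)
  have ad: "a \<le> d" unfolding a_def by (rule Least_le) (rule ud)
  have below: "coeff u k = 0" if "k < a" for k
    using not_less_Least[of k "\<lambda>k. coeff u k \<noteq> 0"] that unfolding a_def by blast
  have above: "coeff u k = 0" if "k > d" for k
    using that unfolding d_def by (simp add: coeff_eq_0)
  define D where "D = d - a"
  have bA: "R (a + t) \<le> min t D" if "t \<le> \<delta>" for t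
  proof -
    have nz: "Pt u \<delta> (a + t) \<noteq> 0"
    proof
      assume "Pt u \<delta> (a + t) = 0"
      hence "coeff (Pt u \<delta> (a + t)) t = 0" by simp
      thus False using that ua by (simp add: coeff_Pt)
    qed
    have lo: "coeff (Pt u \<delta> (a + t)) k = 0" if "k < t - D" for k
      using that ad above[of "a + t - k"] by (auto simp: coeff_Pt D_def)
    have hi: "degree (Pt u \<delta> (a + t)) \<le> t"
      by (rule degree_le) (auto simp: coeff_Pt below)
    have "R (a + t) \<le> t - (t - D)"
      unfolding R_def by (rule roots_bound[OF assms(1,2) nz lo hi])
    thus ?thesis by linarith
  qed
  have bB: "R (d + t) \<le> min (\<delta> - t) D" if "t \<le> \<delta>" for t
  proof -
    have nz: "Pt u \<delta> (d + t) \<noteq> 0"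
    proof
      assume "Pt u \<delta> (d + t) = 0"
      hence "coeff (Pt u \<delta> (d + t)) t = 0" by simp
      thus False using that ud by (simp add: coeff_Pt)
    qed
    have lo: "coeff (Pt u \<delta> (d + t)) k = 0" if "k < t" for k
      using that above[of "d + t - k"] by (auto simp: coeff_Pt)
    have hi: "degree (Pt u \<delta> (d + t)) \<le> min \<delta> (t + D)"
    proof (rule degree_le, intro allI impI)
      fix \<nu> assume "min \<delta> (t + D) < \<nu>"
      thus "coeff (Pt u \<delta> (d + t)) \<nu> = 0"
        using below[of "d + t - \<nu>"] ad by (auto simp: coeff_Pt D_def)
    qed
    have "R (d + t) \<le> min \<delta> (t + D) - t"
      unfolding R_def by (rule roots_bound[OF assms(1,2) nz lo hi])
    thus ?thesis by linarith
  qed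
  have fin: "finite {..d + \<delta>}" by simp
  show ?thesis
  proof (cases "\<delta> < D")
    case True
    define A where "A = (\<lambda>t. a + t) ` {..\<delta>}"
    define B where "B = (\<lambda>t. d + t) ` {..\<delta>}"
    have disj: "A \<inter> B = {}" using True unfolding A_def B_def D_def by auto
    have sub: "A \<union> B \<subseteq> {..d + \<delta>}" using ad unfolding A_def B_def by auto
    have "(\<Sum>i\<in>A \<union> B. w i) \<le> (\<Sum>i\<le>d + \<delta>. w i)" by (rule sum_mono2[OF fin sub]) simp
    moreover have "(\<Sum>i\<in>A \<union> B. w i) = (\<Sum>i\<in>A. w i) + (\<Sum>i\<in>B. w i)"
      by (rule sum.union_disjoint) (use disj in \<open>auto simp: A_def B_def\<close>)
    moreover have "(\<Sum>i\<in>A. w i) = (\<Sum>t\<le>\<delta>. w (a + t))"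
      unfolding A_def by (subst sum.reindex) (auto simp: inj_on_def)
    moreover have "(\<Sum>i\<in>B. w i) = (\<Sum>t\<le>\<delta>. w (d + t))"
      unfolding B_def by (subst sum.reindex) (auto simp: inj_on_def)
    moreover have "(\<Sum>t\<le>\<delta>. n) \<le> (\<Sum>t\<le>\<delta>. w (a + t)) + (\<Sum>t\<le>\<delta>. w (d + t))"
      unfolding sum.distrib[symmetric]
    proof (rule sum_mono)
      fix t assume "t \<in> {..\<delta>}"
      hence "R (a + t) \<le> t" "R (d + t) \<le> \<delta> - t" "t \<le> \<delta>" using bA[of t] bB[of t] by auto
      thus "n \<le> w (a + t) + w (d + t)" using wR[of "a + t"] wR[of "d + t"] assms(3) by linarith
    qed
    ultimately show ?thesis unfolding w_def d_def by (simp add: mult.commute)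
  next
    case False
    define A where "A = (\<lambda>t. a + t) ` {..<D}"
    define B where "B = (\<lambda>s. d + \<delta> - s) ` {..\<delta>}"
    have disj: "A \<inter> B = {}" unfolding A_def B_def D_def by auto
    have sub: "A \<union> B \<subseteq> {..d + \<delta>}" using ad unfolding A_def B_def D_def by auto
    have "(\<Sum>i\<in>A \<union> B. w i) \<le> (\<Sum>i\<le>d + \<delta>. w i)" by (rule sum_mono2[OF fin sub]) simp
    moreover have "(\<Sum>i\<in>A \<union> B. w i) = (\<Sum>i\<in>A. w i) + (\<Sum>i\<in>B. w i)"
      by (rule sum.union_disjoint) (use disj in \<open>auto simp: A_def B_def\<close>)
    moreover have "(\<Sum>i\<in>A. w i) = (\<Sum>t<D. w (a + t))"
      unfolding A_def by (subst sum.reindex) (auto simp: inj_on_def)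
    moreover have "(\<Sum>i\<in>B. w i) = (\<Sum>s\<le>\<delta>. w (d + \<delta> - s))"
      unfolding B_def by (subst sum.reindex) (auto simp: inj_on_def)
    moreover have "(\<Sum>t<D. n - t) \<le> (\<Sum>t<D. w (a + t))"
    proof (rule sum_mono)
      fix t assume "t \<in> {..<D}"
      hence "R (a + t) \<le> t" using bA[of t] False by auto
      thus "n - t \<le> w (a + t)" using wR[of "a + t"] by linarith
    qed
    moreover have "(\<Sum>s\<le>\<delta>. n - min s D) \<le> (\<Sum>s\<le>\<delta>. w (d + \<delta> - s))"
    proof (rule sum_mono)
      fix s assume s: "s \<in> {..\<delta>}"
      hence "R (d + (\<delta> - s)) \<le> min (\<delta> - (\<delta> - s)) D" using bB[of "\<delta> - s"] by auto
      moreover have "d + (\<delta> - s) = d + \<delta> - s" "\<delta> - (\<delta> - s) = s" using s by auto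
      ultimately have "R (d + \<delta> - s) \<le> min s D" by simp
      thus "n - min s D \<le> w (d + \<delta> - s)" using wR[of "d + \<delta> - s"] by linarith
    qed
    moreover have "n * (\<delta> + 1) \<le> (\<Sum>t<D. n - t) + (\<Sum>s\<le>\<delta>. n - min s D)"
      by (rule arith_key) (use False assms(3) in auto)
    ultimately show ?thesis unfolding w_def d_def by linarith
  qed
qed



theorem theorem2p1:
  fixes \<alpha> :: "'a::{finite,field}" and n \<delta> :: nat
  assumes "1 \<le> n" and "\<delta> \<le> n - 1"
    and "n \<le> CARD('a) - 1"
    and "\<alpha> \<noteq> 0" and "mult_ord \<alpha> \<ge> n"
  shows "right_invertible_row n (G_mat \<alpha> \<delta>)
    \<and> row_constraint_length n (G_mat \<alpha> \<delta>) = \<delta>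
    \<and> code_dist n (row_code n (G_mat \<alpha> \<delta>)) = n * (\<delta> + 1)"
proof -
  have inj: "inj_on (\<lambda>j. \<alpha>^j) {..<n}" by (rule pow_inj[OF assms(4,5)])
  have dn: "\<delta> < n" using assms(1,2) by linarith
  have p1: "right_invertible_row n (G_mat \<alpha> \<delta>)" by (rule right_inv[OF assms(4) inj dn])
  have degG: "degree (G_mat \<alpha> \<delta> j) = \<delta>" for j
  proof (rule antisym)
    show "degree (G_mat \<alpha> \<delta> j) \<le> \<delta>" by (rule degree_le) (simp add: coeff_G)
    show "\<delta> \<le> degree (G_mat \<alpha> \<delta> j)" by (rule le_degree) (simp add: coeff_G assms(4))
  qed
  have G0: "G_mat \<alpha> \<delta> j \<noteq> 0" for j
  proof
    assume "G_mat \<alpha> \<delta> j = 0"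
    hence "coeff (G_mat \<alpha> \<delta> j) 0 = 0" by simp
    thus False by (simp add: coeff_G)
  qed
  have ne: "{..<n} \<noteq> {}" using assms(1) by (simp add: lessThan_empty_iff)
  have p2: "row_constraint_length n (G_mat \<alpha> \<delta>) = \<delta>"
  proof -
    have "(\<lambda>j. degree (G_mat \<alpha> \<delta> j)) ` {..<n} = {\<delta>}" using ne by (auto simp: degG)
    thus ?thesis unfolding row_constraint_length_def by simp
  qed
  have degv: "Max ((\<lambda>j. degree (if j < n then u * G_mat \<alpha> \<delta> j else 0)) ` {..<n}) = degree u + \<delta>"
    if "u \<noteq> 0" for u
  proof -
    have "(\<lambda>j. degree (if j < n then u * G_mat \<alpha> \<delta> j else 0)) ` {..<n} = {degree u + \<delta>}"
      using ne that by (auto simp: degree_mult_eq G0 degG)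
    thus ?thesis by simp
  qed
  let ?S = "{poly_vec_wt n v |v. v \<in> row_code n (G_mat \<alpha> \<delta>) \<and> v \<noteq> (\<lambda>_. 0)}"
  have mem: "n * (\<delta> + 1) \<in> ?S"
  proof -
    define v where "v = (\<lambda>j. if j < n then 1 * G_mat \<alpha> \<delta> j else 0)"
    have "v \<in> row_code n (G_mat \<alpha> \<delta>)" unfolding v_def row_code_def by blast
    moreover have "v \<noteq> (\<lambda>_. 0)"
    proof
      assume "v = (\<lambda>_. 0)"
      hence "v 0 = 0" by simp
      thus False using assms(1) G0[of 0] unfolding v_def by simp
    qed
    moreover have "poly_vec_wt n v = n * (\<delta> + 1)"
    proof -
      have "poly_vec_wt n v = (\<Sum>i\<le>\<delta>. hamming_wt n (\<lambda>j. coeff (v j) i))"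
        unfolding poly_vec_wt_def v_def by (subst degv) simp_all
      also have "\<dots> = (\<Sum>i\<le>\<delta>. n)"
      proof (intro sum.cong refl)
        fix i assume "i \<in> {..\<delta>}"
        hence "{j. j < n \<and> coeff (v j) i \<noteq> 0} = {..<n}" using assms(4)
          by (auto simp: v_def coeff_G)
        thus "hamming_wt n (\<lambda>j. coeff (v j) i) = n" unfolding hamming_wt_def by simp
      qed
      also have "\<dots> = n * (\<delta> + 1)" by simp
      finally show ?thesis .
    qed
    ultimately show ?thesis by (simp only: mem_Collect_eq) (rule exI[of _ v], simp)
  qed
  have low: "n * (\<delta> + 1) \<le> x" if xS: "x \<in> ?S" for x
  proof -
    obtain v where v: "x = poly_vec_wt n v" "v \<in> row_code n (G_mat \<alpha> \<delta>)" "v \<noteq> (\<lambda>_. 0)"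
      using xS by blast
    obtain u where u: "v = (\<lambda>j. if j < n then u * G_mat \<alpha> \<delta> j else 0)"
      using v(2) unfolding row_code_def by blast
    have "u \<noteq> 0" using v(3) u by auto
    have "x = (\<Sum>i\<le>degree u + \<delta>. hamming_wt n (\<lambda>j. coeff (if j < n then u * G_mat \<alpha> \<delta> j else 0) i))"
      unfolding v(1) poly_vec_wt_def u using degv[OF \<open>u \<noteq> 0\<close>] by simp
    thus ?thesis using weight_lower[OF assms(4) inj dn \<open>u \<noteq> 0\<close>] by simp
  qed
  have p3: "code_dist n (row_code n (G_mat \<alpha> \<delta>)) = n * (\<delta> + 1)"
    unfolding code_dist_def by (rule cInf_eq_minimum[OF mem low]) blast
  show ?thesis using p1 p2 p3 by blast
qed

end
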